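(* The regular tensor product $\mathfrak{S}_A\widehat{\otimes}\mathfrak{S}_B$ is a sub Inf semi-lattice of the maximal tensor product $\check{S}_{AB}$, and $\mathfrak{S}_A\widetilde{\otimes}\mathfrak{S}_B\subseteq\mathfrak{S}_A\widehat{\otimes}\mathfrak{S}_B$.
   Context: $\mathfrak{B}=\{\mathbf{Y},\mathbf{N},\bot\}$ with $\bot$ below the incomparable $\mathbf{Y},\mathbf{N}$, meet $\wedge$, involution $\overline{\cdot}$ and product $\bullet$ ($x\bullet\mathbf{Y}=x$, $x\bullet\mathbf{N}=\mathbf{N}$, $\bot\bullet\bot=\bot$). $(\mathfrak{S}_A,\mathfrak{E}_A,\epsilon^{\mathfrak{S}_A})$, $(\mathfrak{S}_B,\mathfrak{E}_B,\epsilon^{\mathfrak{S}_B})$ are States/Effects Chu spaces (effects with negation $\overline{\mathfrak{l}}$, constant-$\mathbf{Y}$ effect $\mathfrak{Y}_{\mathfrak{E}}$, bottom effect $\bot_{\mathfrak{E}}$). $\check{S}_{AB}$ is the set of maps $\Phi:\mathfrak{E}_A\times\mathfrak{E}_B\to\mathfrak{B}$ preserving arbitrary infima in each variable with $\Phi(\overline{\mathfrak{l}_A},\mathfrak{Y}_{\mathfrak{E}_B})=\overline{\Phi(\mathfrak{l}_A,\mathfrak{Y}_{\mathfrak{E}_B})}$, $\Phi(\mathfrak{Y}_{\mathfrak{E}_A},\overline{\mathfrak{l}_B})=\overline{\Phi(\mathfrak{Y}_{\mathfrak{E}_A},\mathfrak{l}_B)}$, $\Phi(\mathfrak{Y}_{\mathfrak{E}_A},\mathfrak{Y}_{\mathfrak{E}_B})=\mathbf{Y}$,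 ordered pointwise. $\mathfrak{S}_A\widetilde{\otimes}\mathfrak{S}_B$ is its subset of maps $(\mathfrak{l}_A,\mathfrak{l}_B)\mapsto\bigwedge_{i}\epsilon_{\mathfrak{l}_A}(\sigma_{i,A})\bullet\epsilon_{\mathfrak{l}_B}(\sigma_{i,B})$. $\mathfrak{S}_A\widehat{\otimes}\mathfrak{S}_B$ is the set of $\Phi\in\check{S}_{AB}$ such that: $\Phi(\mathfrak{l}_A,\overline{\mathfrak{Y}_{\mathfrak{E}_B}})=\Phi(\overline{\mathfrak{Y}_{\mathfrak{E}_A}},\mathfrak{l}_B)=\mathbf{N}$ for all $\mathfrak{l}_A,\mathfrak{l}_B$; if $\Phi(\mathfrak{l}_A,\mathfrak{Y}_{\mathfrak{E}_B})=\mathbf{Y}$ then $(\Phi(\mathfrak{l}_A,\mathfrak{l}_B),\Phi(\mathfrak{l}_A,\overline{\mathfrak{l}_B}))\in\{(\mathbf{Y},\mathbf{N}),(\mathbf{N},\mathbf{Y}),(\bot,\bot)\}$ for all $\mathfrak{l}_B$, and symmetrically in $A$; if $\Phi(\mathfrak{l}_A,\mathfrak{Y}_{\mathfrak{E}_B})=\bot$ then for all $\mathfrak{l}_B,\mathfrak{l}'_B$ with $\mathfrak{l}_B\sqcap\mathfrak{l}'_B=\bot_{\mathfrak{E}_B}$, $(\Phi(\mathfrak{l}_A,\mathfrak{l}_B),\Phi(\mathfrak{l}_A,\mathfrak{l}'_B))\in\{(\bot,\mathbf{N}),(\mathbf{N},\bot),(\bot,\bot)\}$, and symmetrically in $A$.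 *)

theory Defs
  imports Main
begin

datatype bv = Yb | Nb | Bt

definition ble :: "bv \<Rightarrow> bv \<Rightarrow> bool" where
  "ble x y \<longleftrightarrow> x = Bt \<or> x = y"

text \<open>Infimum of a nonempty subset of B (only used for nonempty sets).\<close>
definition bInf :: "bv set \<Rightarrow> bv" where
  "bInf X = (if \<exists>x. X = {x} then the_elem X else Bt)"

definition bmeet :: "bv \<Rightarrow> bv \<Rightarrow> bv" where
  "bmeet x y = bInf {x, y}"

fun bneg :: "bv \<Rightarrow> bv" where
  "bneg Yb = Nb" | "bneg Nb = Yb" | "bneg Bt = Bt"

fun bprod :: "bv \<Rightarrow> bv \<Rightarrow> bv" where
  "bprod x Yb = x"
| "bprod x Nb = Nb"
| "bprod Yb Bt = Bt"
| "bprod Nb Bt = Nb"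
| "bprod Bt Bt = Bt"

text \<open>States are the elements of the type 's; an effect is identified with its
  evaluation map l, so that epsilon_l(sigma) = l sigma (extensional Chu space).\<close>

definition effInf :: "('s \<Rightarrow> bv) set \<Rightarrow> ('s \<Rightarrow> bv)" where
  "effInf L = (\<lambda>\<sigma>. bInf ((\<lambda>l. l \<sigma>) ` L))"

definition effMeet :: "('s \<Rightarrow> bv) \<Rightarrow> ('s \<Rightarrow> bv) \<Rightarrow> ('s \<Rightarrow> bv)" where
  "effMeet l l' = effInf {l, l'}"

definition effNeg :: "('s \<Rightarrow> bv) \<Rightarrow> ('s \<Rightarrow> bv)" where
  "effNeg l = (\<lambda>\<sigma>. bneg (l \<sigma>))"

definition effY :: "'s \<Rightarrow> bv" where
  "effY = (\<lambda>_. Yb)"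

definition effBot :: "'s \<Rightarrow> bv" where
  "effBot = (\<lambda>_. Bt)"

definition effect_space :: "('s \<Rightarrow> bv) set \<Rightarrow> bool" where
  "effect_space E \<longleftrightarrow>
     effY \<in> E \<and> (\<forall>l\<in>E. effNeg l \<in> E) \<and>
     (\<forall>L. L \<subseteq> E \<and> L \<noteq> {} \<longrightarrow> effInf L \<in> E)"

type_synonym ('a, 'b) bimap = "('a \<Rightarrow> bv) \<Rightarrow> ('b \<Rightarrow> bv) \<Rightarrow> bv"

text \<open>Maps on E_A x E_B are represented as total functions which are Bt outside
  E_A x E_B.\<close>

definition maxTensor :: "('a \<Rightarrow> bv) set \<Rightarrow> ('b \<Rightarrow> bv) set \<Rightarrow> ('a, 'b) bimap set" where
  "maxTensor EA EB = {\<Phi>.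
     (\<forall>lA lB. \<not> (lA \<in> EA \<and> lB \<in> EB) \<longrightarrow> \<Phi> lA lB = Bt) \<and>
     (\<forall>lA\<in>EA. \<forall>L. L \<subseteq> EB \<and> L \<noteq> {} \<longrightarrow> \<Phi> lA (effInf L) = bInf (\<Phi> lA ` L)) \<and>
     (\<forall>lB\<in>EB. \<forall>L. L \<subseteq> EA \<and> L \<noteq> {} \<longrightarrow> \<Phi> (effInf L) lB = bInf ((\<lambda>lA. \<Phi> lA lB) ` L)) \<and>
     (\<forall>lA\<in>EA. \<Phi> (effNeg lA) effY = bneg (\<Phi> lA effY)) \<and>
     (\<forall>lB\<in>EB. \<Phi> effY (effNeg lB) = bneg (\<Phi> effY lB)) \<and>
     \<Phi> effY effY = Yb}"

definition bimapLe :: "('a \<Rightarrow> bv) set \<Rightarrow> ('b \<Rightarrow> bv) set \<Rightarrow> ('a, 'b) bimap \<Rightarrow> ('a, 'b) bimap \<Rightarrow> bool" where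
  "bimapLe EA EB \<Phi> \<Psi> \<longleftrightarrow> (\<forall>lA\<in>EA. \<forall>lB\<in>EB. ble (\<Phi> lA lB) (\<Psi> lA lB))"

definition bimapInf :: "('a \<Rightarrow> bv) set \<Rightarrow> ('b \<Rightarrow> bv) set \<Rightarrow> ('a, 'b) bimap set \<Rightarrow> ('a, 'b) bimap" where
  "bimapInf EA EB F = (\<lambda>lA lB. if lA \<in> EA \<and> lB \<in> EB then bInf ((\<lambda>\<Phi>. \<Phi> lA lB) ` F) else Bt)"

definition minTensor :: "('a \<Rightarrow> bv) set \<Rightarrow> ('b \<Rightarrow> bv) set \<Rightarrow> ('a, 'b) bimap set" where
  "minTensor EA EB = {\<Phi>. \<exists>P :: ('a \<times> 'b) set. P \<noteq> {} \<and>
     \<Phi> = (\<lambda>lA lB. if lA \<in> EA \<and> lB \<in> EB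
                   then bInf ((\<lambda>(\<sigma>A, \<sigma>B). bprod (lA \<sigma>A) (lB \<sigma>B)) ` P) else Bt)}"

definition regTensor :: "('a \<Rightarrow> bv) set \<Rightarrow> ('b \<Rightarrow> bv) set \<Rightarrow> ('a, 'b) bimap set" where
  "regTensor EA EB = {\<Phi> \<in> maxTensor EA EB.
     (\<forall>lA\<in>EA. \<Phi> lA (effNeg effY) = Nb) \<and>
     (\<forall>lB\<in>EB. \<Phi> (effNeg effY) lB = Nb) \<and>
     (\<forall>lA\<in>EA. \<Phi> lA effY = Yb \<longrightarrow>
        (\<forall>lB\<in>EB. (\<Phi> lA lB, \<Phi> lA (effNeg lB)) \<in> {(Yb, Nb), (Nb, Yb), (Bt, Bt)})) \<and>
     (\<forall>lB\<in>EB. \<Phi> effY lB = Yb \<longrightarrow>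
        (\<forall>lA\<in>EA. (\<Phi> lA lB, \<Phi> (effNeg lA) lB) \<in> {(Yb, Nb), (Nb, Yb), (Bt, Bt)})) \<and>
     (\<forall>lA\<in>EA. \<Phi> lA effY = Bt \<longrightarrow>
        (\<forall>lB\<in>EB. \<forall>lB'\<in>EB. effMeet lB lB' = effBot \<longrightarrow>
           (\<Phi> lA lB, \<Phi> lA lB') \<in> {(Bt, Nb), (Nb, Bt), (Bt, Bt)})) \<and>
     (\<forall>lB\<in>EB. \<Phi> effY lB = Bt \<longrightarrow>
        (\<forall>lA\<in>EA. \<forall>lA'\<in>EA. effMeet lA lA' = effBot \<longrightarrow>
           (\<Phi> lA lB, \<Phi> lA' lB) \<in> {(Bt, Nb), (Nb, Bt), (Bt, Bt)}))}"

end

theory Submission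
  imports Defs
begin

lemma bInf_single[simp]: "bInf {x} = x" by (simp add: bInf_def)

lemma bInf_val: "v \<noteq> Bt \<Longrightarrow> (bInf X = v) = (X = {v})"
  by (auto simp: bInf_def)

lemma bInf_all: "X \<noteq> {} \<Longrightarrow> v \<noteq> Bt \<Longrightarrow> (bInf X = v) = (\<forall>x\<in>X. x = v)"
  by (auto simp: bInf_val)

lemma bInf_eqI:
  assumes "X \<noteq> {}" "Y \<noteq> {}" "\<And>v. v \<noteq> Bt \<Longrightarrow> (\<forall>x\<in>X. x = v) = (\<forall>y\<in>Y. y = v)"
  shows "bInf X = bInf Y"
proof (cases "bInf X = Bt")
  case True
  show ?thesis
  proof (rule ccontr)
    assume "bInf X \<noteq> bInf Y"
    then have "bInf Y \<noteq> Bt" using True by simp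
    then have "\<forall>y\<in>Y. y = bInf Y" using bInf_all[OF assms(2)] by blast
    then have "\<forall>x\<in>X. x = bInf Y" using assms(3) \<open>bInf Y \<noteq> Bt\<close> by blast
    then have "bInf X = bInf Y" using bInf_all[OF assms(1) \<open>bInf Y \<noteq> Bt\<close>] by blast
    then show False using \<open>bInf X \<noteq> bInf Y\<close> by simp
  qed
next
  case False
  then have "\<forall>x\<in>X. x = bInf X" using bInf_all[OF assms(1)] by blast
  then have "\<forall>y\<in>Y. y = bInf X" using assms(3) False by blast
  then show ?thesis using bInf_all[OF assms(2) False] by simp
qed

lemma bInf_mem: "x \<in> X \<Longrightarrow> bInf X = Bt \<or> bInf X = x"
  by (auto simp: bInf_def)

lemma bInf_swap:
  assumes "P \<noteq> {}" "L \<noteq> {}"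
  shows "bInf ((\<lambda>p. bInf (g p ` L)) ` P) = bInf ((\<lambda>l. bInf ((\<lambda>p. g p l) ` P)) ` L)"
  apply (rule bInf_eqI)
  using assms by (auto simp: bInf_all)

lemma bneg_bInf: "bInf (bneg ` X) = bneg (bInf X)"
proof (cases "X = {}")
  case True then show ?thesis by (simp add: bInf_def)
next
  case False
  have inv: "bneg (bneg x) = x" for x by (cases x) auto
  show ?thesis
  proof (cases "bInf X = Bt")
    case True
    show ?thesis
    proof (rule ccontr)
      assume "bInf (bneg ` X) \<noteq> bneg (bInf X)"
      then have ne: "bInf (bneg ` X) \<noteq> Bt" using True by simp
      then have "\<forall>x\<in>X. bneg x = bInf (bneg ` X)" using bInf_all[of "bneg ` X"] False by auto
      then have "\<forall>x\<in>X. x = bneg (bInf (bneg ` X))" using inv by metis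
      moreover have "bneg (bInf (bneg ` X)) \<noteq> Bt" using ne inv by (metis bneg.simps(3))
      ultimately have "bInf X \<noteq> Bt" using bInf_all[OF False] by metis
      then show False using True by simp
    qed
  next
    case F2: False
    then have "\<forall>x\<in>X. x = bInf X" using bInf_all[OF False] by blast
    then have "\<forall>y\<in>bneg ` X. y = bneg (bInf X)" by auto
    moreover have "bneg (bInf X) \<noteq> Bt" using F2 inv by (metis bneg.simps(3))
    ultimately show ?thesis using bInf_all[of "bneg ` X"] False by auto
  qed
qed

lemma bprod_bInf_right:
  assumes "Y \<noteq> {}" shows "bprod x (bInf Y) = bInf (bprod x ` Y)"
proof (cases x)
  case Yb
  have "bprod Yb y = y" for y by (cases y) auto
  then show ?thesis using Yb by simp
next
  case Nb
  have "bprod Nb y = Nb" for y by (cases y) auto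
  then have "bprod Nb ` Y = {Nb}" using assms by auto
  then show ?thesis using Nb \<open>bprod Nb _ = Nb\<close> by simp
next
  case Bt
  show ?thesis
  proof (cases "bInf Y = Nb")
    case True
    then have "Y = {Nb}" by (simp add: bInf_val)
    then show ?thesis using Bt by simp
  next
    case False
    then have l: "bprod Bt (bInf Y) = Bt" by (cases "bInf Y") auto
    have "bInf (bprod Bt ` Y) = Bt"
    proof (rule ccontr)
      assume a: "bInf (bprod Bt ` Y) \<noteq> Bt"
      then have "\<forall>y\<in>Y. bprod Bt y = bInf (bprod Bt ` Y)" using bInf_all[of "bprod Bt ` Y"] assms by auto
      moreover have "bprod Bt y \<noteq> Yb" for y by (cases y) auto
      ultimately have "\<forall>y\<in>Y. bprod Bt y = Nb" using a by (metis assms bv.exhaust equals0I)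
      then have "\<forall>y\<in>Y. y = Nb" by (metis bprod.simps bv.exhaust bv.distinct)
      then show False using False bInf_all[OF assms] by auto
    qed
    then show ?thesis using l Bt by simp
  qed
qed

lemma bprod_comm: "bprod x y = bprod y x" by (cases x; cases y) auto

lemma bprod_bInf_left:
  assumes "X \<noteq> {}" shows "bprod (bInf X) y = bInf ((\<lambda>x. bprod x y) ` X)"
  using bprod_bInf_right[OF assms, of y] by (simp add: bprod_comm)

lemma image_all_const:
  assumes "\<forall>y\<in>F. f y = c" "F \<noteq> {}" shows "f ` F = {c}"
proof -
  obtain P where "P \<in> F" using assms by blast
  then have "c \<in> f ` F" using assms(1) by (metis image_eqI)
  then show ?thesis using assms(1) by auto
qed

lemma es_facts:
  fixes E :: "('a \<Rightarrow> bv) set"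
  assumes "effect_space E"
  shows "effY \<in> E" "\<And>l. l \<in> E \<Longrightarrow> effNeg l \<in> E"
    "\<And>L. L \<subseteq> E \<Longrightarrow> L \<noteq> {} \<Longrightarrow> effInf L \<in> E" "effBot \<in> E"
    "effNeg effY \<in> E"
proof -
  show 1: "effY \<in> E" "\<And>l. l \<in> E \<Longrightarrow> effNeg l \<in> E"
    "\<And>L. L \<subseteq> E \<Longrightarrow> L \<noteq> {} \<Longrightarrow> effInf L \<in> E" using assms by (auto simp: effect_space_def)
  have "effInf {effY, effNeg effY} = (effBot :: 'a \<Rightarrow> bv)"
    by (auto simp: effInf_def effY_def effNeg_def effBot_def bInf_def)
  moreover have "effInf {effY, effNeg effY} \<in> E" using 1 by (intro 1(3)) auto
  ultimately show "effBot \<in> E" by simp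
  show "effNeg effY \<in> E" using 1 by simp
qed

lemma effBotY: "effInf {effY, effNeg effY} = effBot"
  by (auto simp: effInf_def effY_def effNeg_def effBot_def bInf_def)

lemma effBotL: "effInf {effBot, l} = effBot"
  by (auto simp: effInf_def effBot_def bInf_def)

lemma pair_neg: "((x,y) \<in> {(Yb,Nb),(Nb,Yb),(Bt,Bt)}) = (y = bneg x)"
  by (cases x; cases y) auto

lemma pair_bot: "((x,y) \<in> {(Bt,Nb),(Nb,Bt),(Bt,Bt)}) = (x \<noteq> Yb \<and> y \<noteq> Yb \<and> \<not> (x = Nb \<and> y = Nb))"
  by (cases x; cases y) auto

lemma row_facts:
  assumes es: "effect_space EA" "effect_space EB"
    and P: "\<Phi> \<in> maxTensor EA EB" and NN: "\<Phi> lA (effNeg effY) = Nb" and lA: "lA \<in> EA"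
  shows "\<Phi> lA effY = Nb \<Longrightarrow> lB \<in> EB \<Longrightarrow> \<Phi> lA lB = Nb"
    and "\<Phi> lA effY = Yb \<Longrightarrow> lB \<in> EB \<Longrightarrow> lB' \<in> EB \<Longrightarrow> effMeet lB lB' = effBot
         \<Longrightarrow> \<Phi> lA lB = Nb \<Longrightarrow> \<Phi> lA lB' = Nb \<Longrightarrow> False"
proof -
  note e = es_facts[OF es(2)]
  have inf: "\<And>L. L \<subseteq> EB \<Longrightarrow> L \<noteq> {} \<Longrightarrow> \<Phi> lA (effInf L) = bInf (\<Phi> lA ` L)"
    using P lA by (simp add: maxTensor_def)
  have bot: "\<Phi> lA effBot = bInf {\<Phi> lA effY, Nb}"
    using inf[of "{effY, effNeg effY}"] e NN by (simp add: effBotY)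
  show "\<Phi> lA lB = Nb" if "\<Phi> lA effY = Nb" "lB \<in> EB"
  proof -
    have "\<Phi> lA effBot = Nb" using bot that by simp
    moreover have "\<Phi> lA effBot = bInf {Nb, \<Phi> lA lB}"
      using inf[of "{effBot, lB}"] e that \<open>\<Phi> lA effBot = Nb\<close> by (simp add: effBotL)
    ultimately show ?thesis by (simp add: bInf_val)
  qed
  show False if "\<Phi> lA effY = Yb" "lB \<in> EB" "lB' \<in> EB" "effMeet lB lB' = effBot"
         "\<Phi> lA lB = Nb" "\<Phi> lA lB' = Nb"
  proof -
    have "\<Phi> lA effBot = Bt" using bot that by (simp add: bInf_def)
    moreover have "\<Phi> lA effBot = Nb"
      using inf[of "{lB, lB'}"] that by (simp add: effMeet_def)
    ultimately show False by simp
  qed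
qed

lemma col_facts:
  assumes es: "effect_space EA" "effect_space EB"
    and P: "\<Phi> \<in> maxTensor EA EB" and NN: "\<Phi> (effNeg effY) lB = Nb" and lB: "lB \<in> EB"
  shows "\<Phi> effY lB = Nb \<Longrightarrow> lA \<in> EA \<Longrightarrow> \<Phi> lA lB = Nb"
    and "\<Phi> effY lB = Yb \<Longrightarrow> lA \<in> EA \<Longrightarrow> lA' \<in> EA \<Longrightarrow> effMeet lA lA' = effBot
         \<Longrightarrow> \<Phi> lA lB = Nb \<Longrightarrow> \<Phi> lA' lB = Nb \<Longrightarrow> False"
proof -
  note e = es_facts[OF es(1)]
  have inf: "\<And>L. L \<subseteq> EA \<Longrightarrow> L \<noteq> {} \<Longrightarrow> \<Phi> (effInf L) lB = bInf ((\<lambda>lA. \<Phi> lA lB) ` L)"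
    using P lB by (simp add: maxTensor_def)
  have bot: "\<Phi> effBot lB = bInf {\<Phi> effY lB, Nb}"
    using inf[of "{effY, effNeg effY}"] e NN by (simp add: effBotY)
  show "\<Phi> lA lB = Nb" if "\<Phi> effY lB = Nb" "lA \<in> EA"
  proof -
    have "\<Phi> effBot lB = Nb" using bot that by simp
    moreover have "\<Phi> effBot lB = bInf {Nb, \<Phi> lA lB}"
      using inf[of "{effBot, lA}"] e that \<open>\<Phi> effBot lB = Nb\<close> by (simp add: effBotL)
    ultimately show ?thesis by (simp add: bInf_val)
  qed
  show False if "\<Phi> effY lB = Yb" "lA \<in> EA" "lA' \<in> EA" "effMeet lA lA' = effBot"
         "\<Phi> lA lB = Nb" "\<Phi> lA' lB = Nb"
  proof -
    have "\<Phi> effBot lB = Bt" using bot that by (simp add: bInf_def)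
    moreover have "\<Phi> effBot lB = Nb"
      using inf[of "{lA, lA'}"] that by (simp add: effMeet_def)
    ultimately show False by simp
  qed
qed

lemma inf_part:
  fixes EA :: "('a \<Rightarrow> bv) set" and EB :: "('b \<Rightarrow> bv) set"
  assumes es: "effect_space EA" "effect_space EB"
    and F: "F \<subseteq> regTensor EA EB" "F \<noteq> {}"
  shows "bimapInf EA EB F \<in> regTensor EA EB"
proof -
  define G where "G = bimapInf EA EB F"
  note eA = es_facts[OF es(1)] and eB = es_facts[OF es(2)]
  have Gin: "\<And>lA lB. lA \<in> EA \<Longrightarrow> lB \<in> EB \<Longrightarrow> G lA lB = bInf ((\<lambda>\<Phi>. \<Phi> lA lB) ` F)"
    by (simp add: G_def bimapInf_def)
  have FM: "\<And>\<Phi>. \<Phi> \<in> F \<Longrightarrow> \<Phi> \<in> maxTensor EA EB" using F by (auto simp: regTensor_def)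
  have FR: "\<And>\<Phi>. \<Phi> \<in> F \<Longrightarrow> \<Phi> \<in> regTensor EA EB" using F by auto
  have max: "G \<in> maxTensor EA EB"
    unfolding maxTensor_def
  proof (intro CollectI conjI ballI allI impI)
    show "G lA lB = Bt" if "\<not> (lA \<in> EA \<and> lB \<in> EB)" for lA lB
      using that by (auto simp: G_def bimapInf_def)
  next
    fix lA L assume lA: "lA \<in> EA" and L: "L \<subseteq> EB \<and> L \<noteq> {}"
    have "G lA (effInf L) = bInf ((\<lambda>\<Phi>. \<Phi> lA (effInf L)) ` F)" using Gin lA eB L by simp
    also have "\<dots> = bInf ((\<lambda>\<Phi>. bInf ((\<lambda>l. \<Phi> lA l) ` L)) ` F)"
      using FM lA L by (intro arg_cong[where f=bInf] image_cong refl) (auto simp: maxTensor_def)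
    also have "\<dots> = bInf ((\<lambda>l. bInf ((\<lambda>\<Phi>. \<Phi> lA l) ` F)) ` L)"
      by (rule bInf_swap) (use F L in auto)
    also have "\<dots> = bInf (G lA ` L)"
      using Gin lA L by (intro arg_cong[where f=bInf] image_cong refl) auto
    finally show "G lA (effInf L) = bInf (G lA ` L)" .
  next
    fix lB L assume lB: "lB \<in> EB" and L: "L \<subseteq> EA \<and> L \<noteq> {}"
    have "G (effInf L) lB = bInf ((\<lambda>\<Phi>. \<Phi> (effInf L) lB) ` F)" using Gin lB eA L by simp
    also have "\<dots> = bInf ((\<lambda>\<Phi>. bInf ((\<lambda>l. \<Phi> l lB) ` L)) ` F)"
      using FM lB L by (intro arg_cong[where f=bInf] image_cong refl) (auto simp: maxTensor_def)
    also have "\<dots> = bInf ((\<lambda>l. bInf ((\<lambda>\<Phi>. \<Phi> l lB) ` F)) ` L)"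
      by (rule bInf_swap) (use F L in auto)
    also have "\<dots> = bInf ((\<lambda>lA. G lA lB) ` L)"
      using Gin lB L by (intro arg_cong[where f=bInf] image_cong refl) auto
    finally show "G (effInf L) lB = bInf ((\<lambda>lA. G lA lB) ` L)" .
  next
    fix lA assume lA: "lA \<in> EA"
    have "G (effNeg lA) effY = bInf ((\<lambda>\<Phi>. \<Phi> (effNeg lA) effY) ` F)" using Gin lA eA eB by simp
    also have "\<dots> = bInf (bneg ` ((\<lambda>\<Phi>. \<Phi> lA effY) ` F))"
      unfolding image_image using FM lA
      by (intro arg_cong[where f=bInf] image_cong refl) (auto simp: maxTensor_def)
    also have "\<dots> = bneg (G lA effY)" using Gin lA eB by (simp add: bneg_bInf)
    finally show "G (effNeg lA) effY = bneg (G lA effY)" .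
  next
    fix lB assume lB: "lB \<in> EB"
    have "G effY (effNeg lB) = bInf ((\<lambda>\<Phi>. \<Phi> effY (effNeg lB)) ` F)" using Gin lB eA eB by simp
    also have "\<dots> = bInf (bneg ` ((\<lambda>\<Phi>. \<Phi> effY lB) ` F))"
      unfolding image_image using FM lB
      by (intro arg_cong[where f=bInf] image_cong refl) (auto simp: maxTensor_def)
    also have "\<dots> = bneg (G effY lB)" using Gin lB eA by (simp add: bneg_bInf)
    finally show "G effY (effNeg lB) = bneg (G effY lB)" .
  next
    have all: "\<forall>\<Phi>\<in>F. \<Phi> effY effY = Yb" using FM by (simp add: maxTensor_def)
    have "(\<lambda>\<Phi>. \<Phi> effY effY) ` F = {Yb}" using all F(2) by (rule image_all_const)
    then show "G effY effY = Yb" using Gin eA eB by simp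
  qed
  have reg: "\<And>\<Phi>. \<Phi> \<in> F \<Longrightarrow>
     (\<forall>lA\<in>EA. \<Phi> lA (effNeg effY) = Nb) \<and>
     (\<forall>lB\<in>EB. \<Phi> (effNeg effY) lB = Nb) \<and>
     (\<forall>lA\<in>EA. \<Phi> lA effY = Yb \<longrightarrow>
        (\<forall>lB\<in>EB. (\<Phi> lA lB, \<Phi> lA (effNeg lB)) \<in> {(Yb, Nb), (Nb, Yb), (Bt, Bt)})) \<and>
     (\<forall>lB\<in>EB. \<Phi> effY lB = Yb \<longrightarrow>
        (\<forall>lA\<in>EA. (\<Phi> lA lB, \<Phi> (effNeg lA) lB) \<in> {(Yb, Nb), (Nb, Yb), (Bt, Bt)})) \<and>
     (\<forall>lA\<in>EA. \<Phi> lA effY = Bt \<longrightarrow>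
        (\<forall>lB\<in>EB. \<forall>lB'\<in>EB. effMeet lB lB' = effBot \<longrightarrow>
           (\<Phi> lA lB, \<Phi> lA lB') \<in> {(Bt, Nb), (Nb, Bt), (Bt, Bt)})) \<and>
     (\<forall>lB\<in>EB. \<Phi> effY lB = Bt \<longrightarrow>
        (\<forall>lA\<in>EA. \<forall>lA'\<in>EA. effMeet lA lA' = effBot \<longrightarrow>
           (\<Phi> lA lB, \<Phi> lA' lB) \<in> {(Bt, Nb), (Nb, Bt), (Bt, Bt)}))"
    using FR by (simp add: regTensor_def)
  note r1 = reg[THEN conjunct1] and r2 = reg[THEN conjunct2, THEN conjunct1]
    and r3 = reg[THEN conjunct2, THEN conjunct2, THEN conjunct1]
    and r4 = reg[THEN conjunct2, THEN conjunct2, THEN conjunct2, THEN conjunct1]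
    and r5 = reg[THEN conjunct2, THEN conjunct2, THEN conjunct2, THEN conjunct2, THEN conjunct1]
    and r6 = reg[THEN conjunct2, THEN conjunct2, THEN conjunct2, THEN conjunct2, THEN conjunct2]
  have G_all: "\<And>lA lB v. lA \<in> EA \<Longrightarrow> lB \<in> EB \<Longrightarrow> v \<noteq> Bt \<Longrightarrow> (G lA lB = v) = (\<forall>\<Phi>\<in>F. \<Phi> lA lB = v)"
    using Gin F(2) by (simp add: bInf_all)
  have G_mem: "\<And>lA lB \<Phi>. lA \<in> EA \<Longrightarrow> lB \<in> EB \<Longrightarrow> \<Phi> \<in> F \<Longrightarrow> G lA lB = Bt \<or> G lA lB = \<Phi> lA lB"
  proof -
    fix lA lB \<Phi> assume a: "lA \<in> EA" "lB \<in> EB" "\<Phi> \<in> F"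
    from a(3) have "\<Phi> lA lB \<in> (\<lambda>\<Phi>. \<Phi> lA lB) ` F" by (rule imageI)
    then show "G lA lB = Bt \<or> G lA lB = \<Phi> lA lB" using Gin[OF a(1,2)] bInf_mem by metis
  qed
  have vals: "\<And>x. x \<noteq> Bt \<Longrightarrow> x \<noteq> Yb \<Longrightarrow> x = Nb" by (metis bv.exhaust)
  show ?thesis
    unfolding regTensor_def G_def[symmetric]
  proof (intro CollectI conjI ballI impI max)
    show "G lA (effNeg effY) = Nb" if "lA \<in> EA" for lA
    proof -
      have "\<forall>\<Phi>\<in>F. \<Phi> lA (effNeg effY) = Nb" using r1 that by blast
      then show ?thesis using G_all[OF that eB(5), of Nb] by simp
    qed
    show "G (effNeg effY) lB = Nb" if "lB \<in> EB" for lB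
    proof -
      have "\<forall>\<Phi>\<in>F. \<Phi> (effNeg effY) lB = Nb" using r2 that by blast
      then show ?thesis using G_all[OF eA(5) that, of Nb] by simp
    qed
  next
    fix lA lB assume lA: "lA \<in> EA" and Y: "G lA effY = Yb" and lB: "lB \<in> EB"
    have all: "\<forall>\<Phi>\<in>F. \<Phi> lA effY = Yb" using G_all[OF lA eB(1)] Y by auto
    have n: "\<forall>\<Phi>\<in>F. \<Phi> lA (effNeg lB) = bneg (\<Phi> lA lB)"
    proof
      fix \<Phi> assume P: "\<Phi> \<in> F"
      have "\<Phi> lA effY = Yb" using all P by blast
      then have "(\<Phi> lA lB, \<Phi> lA (effNeg lB)) \<in> {(Yb, Nb), (Nb, Yb), (Bt, Bt)}"
        using r3[OF P] lA lB by blast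
      then show "\<Phi> lA (effNeg lB) = bneg (\<Phi> lA lB)" by (simp only: pair_neg)
    qed
    have "G lA (effNeg lB) = bInf (bneg ` ((\<lambda>\<Phi>. \<Phi> lA lB) ` F))"
      unfolding image_image using Gin lA lB eB n by simp
    then have "G lA (effNeg lB) = bneg (G lA lB)"
      using Gin lA lB by (simp add: bneg_bInf)
    then show "(G lA lB, G lA (effNeg lB)) \<in> {(Yb, Nb), (Nb, Yb), (Bt, Bt)}"
      by (simp only: pair_neg)
  next
    fix lA lB assume lB: "lB \<in> EB" and Y: "G effY lB = Yb" and lA: "lA \<in> EA"
    have all: "\<forall>\<Phi>\<in>F. \<Phi> effY lB = Yb" using G_all[OF eA(1) lB] Y by auto
    have n: "\<forall>\<Phi>\<in>F. \<Phi> (effNeg lA) lB = bneg (\<Phi> lA lB)"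
    proof
      fix \<Phi> assume P: "\<Phi> \<in> F"
      have "\<Phi> effY lB = Yb" using all P by blast
      then have "(\<Phi> lA lB, \<Phi> (effNeg lA) lB) \<in> {(Yb, Nb), (Nb, Yb), (Bt, Bt)}"
        using r4[OF P] lA lB by blast
      then show "\<Phi> (effNeg lA) lB = bneg (\<Phi> lA lB)" by (simp only: pair_neg)
    qed
    have "G (effNeg lA) lB = bInf (bneg ` ((\<lambda>\<Phi>. \<Phi> lA lB) ` F))"
      unfolding image_image using Gin lA lB eA n by simp
    then have "G (effNeg lA) lB = bneg (G lA lB)"
      using Gin lA lB by (simp add: bneg_bInf)
    then show "(G lA lB, G (effNeg lA) lB) \<in> {(Yb, Nb), (Nb, Yb), (Bt, Bt)}"
      by (simp only: pair_neg)
  next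
    fix lA lB lB' assume lA: "lA \<in> EA" and B: "G lA effY = Bt" and lB: "lB \<in> EB" and lB': "lB' \<in> EB"
      and m: "effMeet lB lB' = effBot"
    show "(G lA lB, G lA lB') \<in> {(Bt, Nb), (Nb, Bt), (Bt, Bt)}"
    proof (cases "\<exists>\<Phi>\<in>F. \<Phi> lA effY = Bt")
      case True
      then obtain \<Phi> where P: "\<Phi> \<in> F" "\<Phi> lA effY = Bt" by blast
      then have "(\<Phi> lA lB, \<Phi> lA lB') \<in> {(Bt, Nb), (Nb, Bt), (Bt, Bt)}"
        using r5[OF P(1)] P(2) lA lB lB' m by blast
      then show ?thesis using G_mem[OF lA lB P(1)] G_mem[OF lA lB' P(1)] by (simp only: pair_bot) auto
    next
      case False
      have "\<not> (\<forall>\<Phi>\<in>F. \<Phi> lA effY = Yb)" using G_all[OF lA eB(1), of Yb] B by auto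
      then obtain \<Phi>1 where P1: "\<Phi>1 \<in> F" "\<Phi>1 lA effY = Nb" using False vals by blast
      have "\<not> (\<forall>\<Phi>\<in>F. \<Phi> lA effY = Nb)" using G_all[OF lA eB(1), of Nb] B by auto
      then obtain \<Phi>2 where P2: "\<Phi>2 \<in> F" "\<Phi>2 lA effY = Yb" using False vals by blast
      have rr1: "\<Phi>1 lA l = Nb" if "l \<in> EB" for l
        using row_facts(1)[OF es FM[OF P1(1)] bspec[OF r1[OF P1(1)] lA] lA P1(2) that] .
      have "\<not> (\<Phi>2 lA lB = Nb \<and> \<Phi>2 lA lB' = Nb)"
        using row_facts(2)[OF es FM[OF P2(1)] bspec[OF r1[OF P2(1)] lA] lA P2(2) lB lB' m] by blast
      then have "\<not> (G lA lB = Nb \<and> G lA lB' = Nb)" using G_all[OF lA lB, of Nb] G_all[OF lA lB', of Nb] P2(1) by blast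
      moreover have "G lA lB \<noteq> Yb" "G lA lB' \<noteq> Yb"
        using G_mem[OF lA lB P1(1)] G_mem[OF lA lB' P1(1)] rr1 lB lB' by auto
      ultimately show ?thesis by (simp only: pair_bot) auto
    qed
  next
    fix lB lA lA' assume lB: "lB \<in> EB" and B: "G effY lB = Bt" and lA: "lA \<in> EA" and lA': "lA' \<in> EA"
      and m: "effMeet lA lA' = effBot"
    show "(G lA lB, G lA' lB) \<in> {(Bt, Nb), (Nb, Bt), (Bt, Bt)}"
    proof (cases "\<exists>\<Phi>\<in>F. \<Phi> effY lB = Bt")
      case True
      then obtain \<Phi> where P: "\<Phi> \<in> F" "\<Phi> effY lB = Bt" by blast
      then have "(\<Phi> lA lB, \<Phi> lA' lB) \<in> {(Bt, Nb), (Nb, Bt), (Bt, Bt)}"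
        using r6[OF P(1)] P(2) lA lA' lB m by blast
      then show ?thesis using G_mem[OF lA lB P(1)] G_mem[OF lA' lB P(1)] by (simp only: pair_bot) auto
    next
      case False
      have "\<not> (\<forall>\<Phi>\<in>F. \<Phi> effY lB = Yb)" using G_all[OF eA(1) lB, of Yb] B by auto
      then obtain \<Phi>1 where P1: "\<Phi>1 \<in> F" "\<Phi>1 effY lB = Nb" using False vals by blast
      have "\<not> (\<forall>\<Phi>\<in>F. \<Phi> effY lB = Nb)" using G_all[OF eA(1) lB, of Nb] B by auto
      then obtain \<Phi>2 where P2: "\<Phi>2 \<in> F" "\<Phi>2 effY lB = Yb" using False vals by blast
      have rr1: "\<Phi>1 l lB = Nb" if "l \<in> EA" for l
        using col_facts(1)[OF es FM[OF P1(1)] bspec[OF r2[OF P1(1)] lB] lB P1(2) that] .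
      have "\<not> (\<Phi>2 lA lB = Nb \<and> \<Phi>2 lA' lB = Nb)"
        using col_facts(2)[OF es FM[OF P2(1)] bspec[OF r2[OF P2(1)] lB] lB P2(2) lA lA' m] by blast
      then have "\<not> (G lA lB = Nb \<and> G lA' lB = Nb)" using G_all[OF lA lB, of Nb] G_all[OF lA' lB, of Nb] P2(1) by blast
      moreover have "G lA lB \<noteq> Yb" "G lA' lB \<noteq> Yb"
        using G_mem[OF lA lB P1(1)] G_mem[OF lA' lB P1(1)] rr1 lA lA' by auto
      ultimately show ?thesis by (simp only: pair_bot) auto
    qed
  qed
qed


lemma bprod_Yb_left[simp]: "bprod Yb y = y" by (cases y) auto
lemma bprod_Nb_left[simp]: "bprod Nb y = Nb" by (cases y) auto
lemma bprod_notY1: "x \<noteq> Yb \<Longrightarrow> bprod x y \<noteq> Yb" by (cases x; cases y) auto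
lemma bprod_notY2: "y \<noteq> Yb \<Longrightarrow> bprod x y \<noteq> Yb" by (cases x; cases y) auto
lemma bprod_N1: "x \<noteq> Nb \<Longrightarrow> bprod x y = Nb \<Longrightarrow> y = Nb" by (cases x; cases y) auto
lemma bprod_N2: "y \<noteq> Nb \<Longrightarrow> bprod x y = Nb \<Longrightarrow> x = Nb" by (cases x; cases y) auto
lemma meet_bot: "effMeet l l' = effBot \<Longrightarrow> l b = Nb \<Longrightarrow> l' b = Nb \<Longrightarrow> False"
proof -
  assume "effMeet l l' = effBot" "l b = Nb" "l' b = Nb"
  then have "effInf {l, l'} b = effBot b" unfolding effMeet_def by simp
  then have "bInf {l b, l' b} = Bt"
    unfolding effInf_def effBot_def by simp
  then show False using \<open>l b = Nb\<close> \<open>l' b = Nb\<close> by simp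
qed

lemma min_part:
  fixes EA :: "('a \<Rightarrow> bv) set" and EB :: "('b \<Rightarrow> bv) set"
  assumes es: "effect_space EA" "effect_space EB"
    and M: "\<Phi> \<in> minTensor EA EB"
  shows "\<Phi> \<in> regTensor EA EB"
proof -
  note eA = es_facts[OF es(1)] and eB = es_facts[OF es(2)]
  obtain P :: "('a \<times> 'b) set" where P: "P \<noteq> {}" and Pd: "\<Phi> = (\<lambda>lA lB. if lA \<in> EA \<and> lB \<in> EB
                   then bInf ((\<lambda>(\<sigma>A, \<sigma>B). bprod (lA \<sigma>A) (lB \<sigma>B)) ` P) else Bt)"
    using M unfolding minTensor_def by blast
  have Phin: "\<And>lA lB. lA \<in> EA \<Longrightarrow> lB \<in> EB \<Longrightarrow>
     \<Phi> lA lB = bInf ((\<lambda>p. bprod (lA (fst p)) (lB (snd p))) ` P)"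
    by (simp add: Pd split_def)
  have PhiY: "\<And>lA. lA \<in> EA \<Longrightarrow> \<Phi> lA effY = bInf ((\<lambda>p. lA (fst p)) ` P)"
    using Phin eB by (simp add: effY_def)
  have PhiY2: "\<And>lB. lB \<in> EB \<Longrightarrow> \<Phi> effY lB = bInf ((\<lambda>p. lB (snd p)) ` P)"
    using Phin eA by (simp add: effY_def)
  have Pall: "\<And>lA lB v. lA \<in> EA \<Longrightarrow> lB \<in> EB \<Longrightarrow> v \<noteq> Bt \<Longrightarrow>
     (\<Phi> lA lB = v) = (\<forall>p\<in>P. bprod (lA (fst p)) (lB (snd p)) = v)"
    using Phin P by (simp add: bInf_all)
  have max: "\<Phi> \<in> maxTensor EA EB"
    unfolding maxTensor_def
  proof (intro CollectI conjI ballI allI impI)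
    show "\<Phi> lA lB = Bt" if "\<not> (lA \<in> EA \<and> lB \<in> EB)" for lA lB
      using that by (auto simp: Pd)
  next
    fix lA L assume lA: "lA \<in> EA" and L: "L \<subseteq> EB \<and> L \<noteq> {}"
    have "\<Phi> lA (effInf L) = bInf ((\<lambda>p. bprod (lA (fst p)) (effInf L (snd p))) ` P)"
      using Phin lA eB L by simp
    also have "\<dots> = bInf ((\<lambda>p. bInf ((\<lambda>l. bprod (lA (fst p)) (l (snd p))) ` L)) ` P)"
      using L by (intro arg_cong[where f=bInf] image_cong refl)
        (simp add: effInf_def bprod_bInf_right image_image)
    also have "\<dots> = bInf ((\<lambda>l. bInf ((\<lambda>p. bprod (lA (fst p)) (l (snd p))) ` P)) ` L)"
      by (rule bInf_swap) (use P L in auto)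
    also have "\<dots> = bInf (\<Phi> lA ` L)"
      using Phin lA L by (intro arg_cong[where f=bInf] image_cong refl) auto
    finally show "\<Phi> lA (effInf L) = bInf (\<Phi> lA ` L)" .
  next
    fix lB L assume lB: "lB \<in> EB" and L: "L \<subseteq> EA \<and> L \<noteq> {}"
    have "\<Phi> (effInf L) lB = bInf ((\<lambda>p. bprod (effInf L (fst p)) (lB (snd p))) ` P)"
      using Phin lB eA L by simp
    also have "\<dots> = bInf ((\<lambda>p. bInf ((\<lambda>l. bprod (l (fst p)) (lB (snd p))) ` L)) ` P)"
      using L by (intro arg_cong[where f=bInf] image_cong refl)
        (simp add: effInf_def bprod_bInf_left image_image)
    also have "\<dots> = bInf ((\<lambda>l. bInf ((\<lambda>p. bprod (l (fst p)) (lB (snd p))) ` P)) ` L)"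
      by (rule bInf_swap) (use P L in auto)
    also have "\<dots> = bInf ((\<lambda>lA. \<Phi> lA lB) ` L)"
      using Phin lB L by (intro arg_cong[where f=bInf] image_cong refl) auto
    finally show "\<Phi> (effInf L) lB = bInf ((\<lambda>lA. \<Phi> lA lB) ` L)" .
  next
    fix lA assume lA: "lA \<in> EA"
    have "\<Phi> (effNeg lA) effY = bInf (bneg ` ((\<lambda>p. lA (fst p)) ` P))"
      using PhiY[OF eA(2)[OF lA]] by (simp add: image_image effNeg_def)
    then show "\<Phi> (effNeg lA) effY = bneg (\<Phi> lA effY)" using PhiY[OF lA] by (simp add: bneg_bInf)
  next
    fix lB assume lB: "lB \<in> EB"
    have "\<Phi> effY (effNeg lB) = bInf (bneg ` ((\<lambda>p. lB (snd p)) ` P))"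
      using PhiY2[OF eB(2)[OF lB]] by (simp add: image_image effNeg_def)
    then show "\<Phi> effY (effNeg lB) = bneg (\<Phi> effY lB)" using PhiY2[OF lB] by (simp add: bneg_bInf)
  next
    show "\<Phi> effY effY = Yb" using Pall[OF eA(1) eB(1), of Yb] by (simp add: effY_def)
  qed
  show ?thesis
    unfolding regTensor_def
  proof (intro CollectI conjI ballI impI max)
    show "\<Phi> lA (effNeg effY) = Nb" if "lA \<in> EA" for lA
      using Pall[OF that eB(5), of Nb] by (simp add: effY_def effNeg_def)
    show "\<Phi> (effNeg effY) lB = Nb" if "lB \<in> EB" for lB
      using Pall[OF eA(5) that, of Nb] by (simp add: effY_def effNeg_def)
  next
    fix lA lB assume lA: "lA \<in> EA" and Y: "\<Phi> lA effY = Yb" and lB: "lB \<in> EB"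
    have all: "\<forall>p\<in>P. lA (fst p) = Yb" using Pall[OF lA eB(1), of Yb] Y by (simp add: effY_def)
    have "\<Phi> lA lB = bInf ((\<lambda>p. lB (snd p)) ` P)"
      using Phin[OF lA lB] all by (metis (no_types, lifting) bprod_Yb_left image_cong)
    moreover have "\<Phi> lA (effNeg lB) = bInf (bneg ` ((\<lambda>p. lB (snd p)) ` P))"
      using Phin[OF lA eB(2)[OF lB]] all unfolding image_image effNeg_def
      by (metis (no_types, lifting) bprod_Yb_left image_cong)
    ultimately have "\<Phi> lA (effNeg lB) = bneg (\<Phi> lA lB)" by (simp add: bneg_bInf)
    then show "(\<Phi> lA lB, \<Phi> lA (effNeg lB)) \<in> {(Yb, Nb), (Nb, Yb), (Bt, Bt)}"
      by (simp only: pair_neg)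
  next
    fix lB lA assume lB: "lB \<in> EB" and Y: "\<Phi> effY lB = Yb" and lA: "lA \<in> EA"
    have all: "\<forall>p\<in>P. lB (snd p) = Yb" using Pall[OF eA(1) lB, of Yb] Y by (simp add: effY_def)
    have "\<Phi> lA lB = bInf ((\<lambda>p. lA (fst p)) ` P)"
      using Phin[OF lA lB] all by (metis (no_types, lifting) bprod.simps(1) image_cong)
    moreover have "\<Phi> (effNeg lA) lB = bInf (bneg ` ((\<lambda>p. lA (fst p)) ` P))"
      using Phin[OF eA(2)[OF lA] lB] all unfolding image_image effNeg_def
      by (metis (no_types, lifting) bprod.simps(1) image_cong)
    ultimately have "\<Phi> (effNeg lA) lB = bneg (\<Phi> lA lB)" by (simp add: bneg_bInf)
    then show "(\<Phi> lA lB, \<Phi> (effNeg lA) lB) \<in> {(Yb, Nb), (Nb, Yb), (Bt, Bt)}"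
      by (simp only: pair_neg)
  next
    fix lA lB lB' assume lA: "lA \<in> EA" and B: "\<Phi> lA effY = Bt" and lB: "lB \<in> EB" and lB': "lB' \<in> EB"
      and m: "effMeet lB lB' = effBot"
    obtain p1 where p1: "p1 \<in> P" "lA (fst p1) \<noteq> Yb"
      using Pall[OF lA eB(1), of Yb] B by (auto simp: effY_def)
    obtain p2 where p2: "p2 \<in> P" "lA (fst p2) \<noteq> Nb"
      using Pall[OF lA eB(1), of Nb] B by (auto simp: effY_def)
    have "\<Phi> lA lB \<noteq> Yb" using Pall[OF lA lB, of Yb] p1 bprod_notY1 by blast
    moreover have "\<Phi> lA lB' \<noteq> Yb" using Pall[OF lA lB', of Yb] p1 bprod_notY1 by blast
    moreover have "\<not> (\<Phi> lA lB = Nb \<and> \<Phi> lA lB' = Nb)"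
    proof
      assume "\<Phi> lA lB = Nb \<and> \<Phi> lA lB' = Nb"
      then have "lB (snd p2) = Nb" "lB' (snd p2) = Nb"
        using Pall[OF lA lB, of Nb] Pall[OF lA lB', of Nb] p2 bprod_N1 by blast+
      then show False using meet_bot[OF m] by blast
    qed
    ultimately show "(\<Phi> lA lB, \<Phi> lA lB') \<in> {(Bt, Nb), (Nb, Bt), (Bt, Bt)}"
      by (simp only: pair_bot) auto
  next
    fix lB lA lA' assume lB: "lB \<in> EB" and B: "\<Phi> effY lB = Bt" and lA: "lA \<in> EA" and lA': "lA' \<in> EA"
      and m: "effMeet lA lA' = effBot"
    obtain p1 where p1: "p1 \<in> P" "lB (snd p1) \<noteq> Yb"
      using Pall[OF eA(1) lB, of Yb] B by (auto simp: effY_def)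
    obtain p2 where p2: "p2 \<in> P" "lB (snd p2) \<noteq> Nb"
      using Pall[OF eA(1) lB, of Nb] B by (auto simp: effY_def)
    have "\<Phi> lA lB \<noteq> Yb" using Pall[OF lA lB, of Yb] p1 bprod_notY2 by blast
    moreover have "\<Phi> lA' lB \<noteq> Yb" using Pall[OF lA' lB, of Yb] p1 bprod_notY2 by blast
    moreover have "\<not> (\<Phi> lA lB = Nb \<and> \<Phi> lA' lB = Nb)"
    proof
      assume "\<Phi> lA lB = Nb \<and> \<Phi> lA' lB = Nb"
      then have "lA (fst p2) = Nb" "lA' (fst p2) = Nb"
        using Pall[OF lA lB, of Nb] Pall[OF lA' lB, of Nb] p2 bprod_N2 by blast+
      then show False using meet_bot[OF m] by blast
    qed
    ultimately show "(\<Phi> lA lB, \<Phi> lA' lB) \<in> {(Bt, Nb), (Nb, Bt), (Bt, Bt)}"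
      by (simp only: pair_bot) auto
  qed
qed


theorem mainTheorem17:
  fixes EA :: "('a \<Rightarrow> bv) set" and EB :: "('b \<Rightarrow> bv) set"
  assumes "effect_space EA" and "effect_space EB"
  shows "regTensor EA EB \<subseteq> maxTensor EA EB
     \<and> (\<forall>F. F \<subseteq> regTensor EA EB \<and> F \<noteq> {} \<longrightarrow>
           bimapInf EA EB F \<in> regTensor EA EB
         \<and> (\<forall>\<Phi>\<in>F. bimapLe EA EB (bimapInf EA EB F) \<Phi>)
         \<and> (\<forall>\<Psi>\<in>maxTensor EA EB. (\<forall>\<Phi>\<in>F. bimapLe EA EB \<Psi> \<Phi>) \<longrightarrow>
              bimapLe EA EB \<Psi> (bimapInf EA EB F)))
     \<and> minTensor EA EB \<subseteq> regTensor EA EB"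
proof (intro conjI allI impI subsetI ballI)
  show "x \<in> maxTensor EA EB" if "x \<in> regTensor EA EB" for x
    using that by (simp add: regTensor_def)
  show "x \<in> regTensor EA EB" if "x \<in> minTensor EA EB" for x
    using min_part[OF assms that] .
  fix F assume F: "F \<subseteq> regTensor EA EB \<and> F \<noteq> {}"
  show "bimapInf EA EB F \<in> regTensor EA EB" using inf_part[OF assms] F by blast
  show "bimapLe EA EB (bimapInf EA EB F) \<Phi>" if "\<Phi> \<in> F" for \<Phi>
    unfolding bimapLe_def
  proof (intro ballI)
    fix lA lB assume "lA \<in> EA" "lB \<in> EB"
    have "\<Phi> lA lB \<in> (\<lambda>\<Phi>. \<Phi> lA lB) ` F" using that by (rule imageI)
    then have "bInf ((\<lambda>\<Phi>. \<Phi> lA lB) ` F) = Bt \<or> bInf ((\<lambda>\<Phi>. \<Phi> lA lB) ` F) = \<Phi> lA lB"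
      by (rule bInf_mem)
    then show "ble (bimapInf EA EB F lA lB) (\<Phi> lA lB)"
      using \<open>lA \<in> EA\<close> \<open>lB \<in> EB\<close> by (auto simp: bimapInf_def ble_def)
  qed
  show "bimapLe EA EB \<Psi> (bimapInf EA EB F)"
    if "\<Psi> \<in> maxTensor EA EB" "\<forall>\<Phi>\<in>F. bimapLe EA EB \<Psi> \<Phi>" for \<Psi>
    unfolding bimapLe_def
  proof (intro ballI)
    fix lA lB assume lA: "lA \<in> EA" and lB: "lB \<in> EB"
    have le: "\<forall>\<Phi>\<in>F. ble (\<Psi> lA lB) (\<Phi> lA lB)" using that(2) lA lB by (auto simp: bimapLe_def)
    show "ble (\<Psi> lA lB) (bimapInf EA EB F lA lB)"
    proof (cases "\<Psi> lA lB = Bt")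
      case True then show ?thesis by (simp add: ble_def)
    next
      case False
      then have "\<forall>\<Phi>\<in>F. \<Phi> lA lB = \<Psi> lA lB" using le by (auto simp: ble_def)
      then have "bInf ((\<lambda>\<Phi>. \<Phi> lA lB) ` F) = \<Psi> lA lB"
        using bInf_all[of "(\<lambda>\<Phi>. \<Phi> lA lB) ` F" "\<Psi> lA lB"] F False by auto
      then show ?thesis using lA lB by (simp add: bimapInf_def ble_def)
    qed
  qed
qed

end
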